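(* Consider an $(n,k)$ sampling mix with arrival rate $\lambda>0$ per sender and parameter $p_a \in [0,1]$. In steady state, the average load of any given queue (the long-run fraction of time it is non-empty) equals \[ \rho = \frac{1-p_a}{k-p_a}, \] and the average delay experienced by a message (mean time between its arrival to the mix and its departure) equals \[ \frac{1-p_a}{\lambda(k-1)}. \]
   Context: An $(n,k)$ sampling mix (integers $n$, $k$ with $2 \le k \le n-1$) consists of $n$ first-in first-out queues with infinite buffers; queue $i$ receives messages from its own sender according to a Poisson process of rate $\lambda$, the $n$ arrival processes being independent. Each sender communicates with its own set of at most $m$ receivers, these sets being disjoint. At each message arrival (say to queue $j$), $k$ queues are selected and "released", where releasing a queue means it forwards (instantly) the message at its head if it is non-empty, and does nothing if it is empty. The selection is: with probability $p_a$, queue $j$ is selected together with $k-1$ queues chosen uniformly at random from the other $n-1$ queues; with probability $1-p_a$, queue $j$ is not selected and $k$ queues are chosen uniformly at random from the other $n-1$ queues. Delay consists only of queueing time in the mix. *)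

theory Defs
  imports "HOL-Probability.Probability"
begin

text \<open>State of the mix: list of the n queue lengths (queues indexed 0..n-1).
  The continuous-time system is described through its jump chain: arrivals to the
  mix form a Poisson process of rate n*lam (superposition of the n senders), each
  arrival going to a uniformly chosen queue, independently of the state.\<close>

definition arrive :: "nat \<Rightarrow> nat list \<Rightarrow> nat list" where
  "arrive j s = s[j := s ! j + 1]"

definition release :: "nat set \<Rightarrow> nat list \<Rightarrow> nat list" where
  "release S s = map (\<lambda>i. if i \<in> S then s ! i - 1 else s ! i) [0..<length s]"

definition selection :: "nat \<Rightarrow> nat \<Rightarrow> real \<Rightarrow> nat \<Rightarrow> nat set pmf" where
  "selection n k pa j =
     bind_pmf (bernoulli_pmf pa) (\<lambda>b.
       if b then map_pmf (insert j) (pmf_of_set {S. S \<subseteq> {..<n} - {j} \<and> card S = k - 1})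
       else pmf_of_set {S. S \<subseteq> {..<n} - {j} \<and> card S = k})"

definition mix_step :: "nat \<Rightarrow> nat \<Rightarrow> real \<Rightarrow> nat list \<Rightarrow> nat list pmf" where
  "mix_step n k pa s =
     bind_pmf (pmf_of_set {..<n}) (\<lambda>j.
       map_pmf (\<lambda>S. release S (arrive j s)) (selection n k pa j))"

definition steady_state :: "nat \<Rightarrow> nat \<Rightarrow> real \<Rightarrow> nat list pmf \<Rightarrow> bool" where
  "steady_state n k pa \<pi> \<longleftrightarrow>
     (\<forall>s\<in>set_pmf \<pi>. length s = n) \<and> bind_pmf \<pi> (mix_step n k pa) = \<pi>"

definition queue_load :: "nat list pmf \<Rightarrow> nat \<Rightarrow> real" where
  "queue_load \<pi> i = measure_pmf.prob \<pi> {s. 0 < s ! i}"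

text \<open>Tagged message: Some (q, m) means it sits in queue q with m messages ahead of it;
  None means it has left the mix.\<close>
definition tag_update :: "nat set \<Rightarrow> (nat \<times> nat) option \<Rightarrow> (nat \<times> nat) option" where
  "tag_update S p = (case p of None \<Rightarrow> None
     | Some (q, m) \<Rightarrow> if q \<in> S then (if m = 0 then None else Some (q, m - 1)) else Some (q, m))"

definition tagged_step ::
  "nat \<Rightarrow> nat \<Rightarrow> real \<Rightarrow> nat list \<times> (nat \<times> nat) option \<Rightarrow> (nat list \<times> (nat \<times> nat) option) pmf" where
  "tagged_step n k pa x =
     bind_pmf (pmf_of_set {..<n}) (\<lambda>j.
       map_pmf (\<lambda>S. (release S (arrive j (fst x)), tag_update S (snd x))) (selection n k pa j))"

text \<open>State right after the arrival event of a typical (tagged) message, arriving to the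
  mix in steady state (Poisson arrivals see the stationary distribution).\<close>
definition tagged_init ::
  "nat \<Rightarrow> nat \<Rightarrow> real \<Rightarrow> nat list pmf \<Rightarrow> (nat list \<times> (nat \<times> nat) option) pmf" where
  "tagged_init n k pa \<pi> =
     bind_pmf \<pi> (\<lambda>s. bind_pmf (pmf_of_set {..<n}) (\<lambda>j.
       map_pmf (\<lambda>S. (release S (arrive j s), tag_update S (Some (j, s ! j)))) (selection n k pa j)))"

definition tagged_dist ::
  "nat \<Rightarrow> nat \<Rightarrow> real \<Rightarrow> nat list pmf \<Rightarrow> nat \<Rightarrow> (nat list \<times> (nat \<times> nat) option) pmf" where
  "tagged_dist n k pa \<pi> t =
     ((\<lambda>d. bind_pmf d (tagged_step n k pa)) ^^ t) (tagged_init n k pa \<pi>)"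

text \<open>Probability that the tagged message is still in the mix after t further arrival events,
  i.e. P(N > t) where N is the number of further events until it departs.\<close>
definition in_mix_prob :: "nat \<Rightarrow> nat \<Rightarrow> real \<Rightarrow> nat list pmf \<Rightarrow> nat \<Rightarrow> real" where
  "in_mix_prob n k pa \<pi> t = measure_pmf.prob (tagged_dist n k pa \<pi> t) {x. snd x \<noteq> None}"

text \<open>Mean delay: E[N] times the mean inter-event time 1/(n lam) (Wald's identity; the
  inter-event times are i.i.d. exponential of rate n lam, independent of the jump chain).\<close>
definition mean_delay :: "nat \<Rightarrow> nat \<Rightarrow> real \<Rightarrow> real \<Rightarrow> nat list pmf \<Rightarrow> real" where
  "mean_delay n k lam pa \<pi> = (\<Sum>t. in_mix_prob n k pa \<pi> t) / (real n * lam)"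

end

theory Submission
  imports Defs
begin



lemma measure_bind_pmf':
  "measure_pmf.prob (bind_pmf M N) X = (\<integral>x. measure_pmf.prob (N x) X \<partial>M)"
proof -
  have "emeasure (measure_pmf (bind_pmf M N)) X = (\<integral>\<^sup>+x. emeasure (N x) X \<partial>M)"
    by (rule emeasure_bind_pmf)
  also have "\<dots> = (\<integral>\<^sup>+x. ennreal (measure_pmf.prob (N x) X) \<partial>M)"
    by (simp add: measure_pmf.emeasure_eq_measure)
  also have "\<dots> = ennreal (\<integral>x. measure_pmf.prob (N x) X \<partial>M)"
    by (rule nn_integral_eq_integral)
       (auto intro!: measure_pmf.integrable_const_bound[where B=1])
  finally show ?thesis
    by (simp add: measure_pmf.emeasure_eq_measure integral_nonneg_AE)
qed

definition noise :: "nat \<Rightarrow> nat \<Rightarrow> real \<Rightarrow> (nat \<times> nat set) pmf" where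
  "noise n k pa = bind_pmf (pmf_of_set {..<n}) (\<lambda>j. map_pmf (Pair j) (selection n k pa j))"

definition Fw :: "nat \<times> nat set \<Rightarrow> nat list \<Rightarrow> nat list" where
  "Fw \<omega> s = release (snd \<omega>) (arrive (fst \<omega>) s)"

lemma mix_step_noise: "mix_step n k pa s = map_pmf (\<lambda>\<omega>. Fw \<omega> s) (noise n k pa)"
  unfolding mix_step_def noise_def Fw_def by (simp add: map_bind_pmf pmf.map_comp o_def)

lemma length_Fw[simp]: "length (Fw \<omega> s) = length s"
  by (simp add: Fw_def release_def arrive_def)

definition Gi :: "nat \<Rightarrow> nat \<times> nat set \<Rightarrow> nat \<Rightarrow> nat" where
  "Gi i \<omega> x = (let x' = (if fst \<omega> = i then x + 1 else x) in if i \<in> snd \<omega> then x' - 1 else x')"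

lemma nth_Fw: "i < length s \<Longrightarrow> Fw \<omega> s ! i = Gi i \<omega> (s ! i)"
  by (simp add: Fw_def release_def arrive_def Gi_def Let_def nth_list_update)

lemma subset_prob:
  assumes "finite A" "i \<in> A" "1 \<le> m" "m \<le> card A"
  shows "measure_pmf.prob (pmf_of_set {S. S \<subseteq> A \<and> card S = m}) {S. i \<in> S} = m / card A"
proof -
  let ?X = "{S. S \<subseteq> A \<and> card S = m}"
  have fin: "finite ?X" using assms(1) by (simp add: finite_Collect_subsets)
  have cX: "card ?X = card A choose m" by (rule n_subsets[OF assms(1)])
  have ne: "?X \<noteq> {}"
    using assms by (metis cX card.empty zero_less_binomial less_irrefl)
  have eq: "?X \<inter> {S. i \<in> S} = insert i ` {T. T \<subseteq> A - {i} \<and> card T = m - 1}"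
  proof (rule set_eqI, rule iffI)
    fix S assume S: "S \<in> ?X \<inter> {S. i \<in> S}"
    hence "S = insert i (S - {i})" by auto
    moreover have "S - {i} \<in> {T. T \<subseteq> A - {i} \<and> card T = m - 1}"
      using S assms(1) by (auto simp: card_Diff_singleton intro: finite_subset)
    ultimately show "S \<in> insert i ` {T. T \<subseteq> A - {i} \<and> card T = m - 1}" by blast
  next
    fix S assume "S \<in> insert i ` {T. T \<subseteq> A - {i} \<and> card T = m - 1}"
    then obtain T where T: "T \<subseteq> A - {i}" "card T = m - 1" "S = insert i T" by auto
    have "finite T" using T(1) assms(1) by (meson finite_Diff finite_subset)
    have "i \<notin> T" using T(1) by auto
    then show "S \<in> ?X \<inter> {S. i \<in> S}" using T assms \<open>finite T\<close> by (auto simp: card_insert_disjoint)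
  qed
  have inj: "inj_on (insert i) {T. T \<subseteq> A - {i} \<and> card T = m - 1}"
    by (rule inj_onI) (metis Diff_insert_absorb Diff_iff insertI1 mem_Collect_eq subsetD)
  have c2: "card (?X \<inter> {S. i \<in> S}) = (card A - 1) choose (m - 1)"
    unfolding eq card_image[OF inj] using assms
    by (subst n_subsets) (auto simp: card_Diff_singleton)
  obtain N where N: "card A = Suc N" using assms by (cases "card A") auto
  obtain M where M: "m = Suc M" using assms by (cases m) auto
  have key: "real (card A choose m) * m = card A * ((card A - 1) choose (m - 1))"
    using Suc_times_binomial_eq[of N M] unfolding N M by (metis diff_Suc_1 mult.commute of_nat_mult)
  have pos: "real (card A choose m) > 0" using assms by simp
  show ?thesis
    unfolding measure_pmf_of_set[OF ne fin] c2 cX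
    using key pos N by (simp add: field_simps)
qed




locale mixctx =
  fixes n k :: nat and pa :: real
  assumes k2: "2 \<le> k" and kn: "k \<le> n - 1" and pa0: "0 \<le> pa" and pa1: "pa \<le> 1"
begin

lemma n_pos: "n > 0" using k2 kn by auto
lemma n_gt_k: "k < n" using k2 kn by auto

abbreviation "X1 j \<equiv> {S. S \<subseteq> {..<n} - {j} \<and> card S = k - 1}"
abbreviation "X0 j \<equiv> {S. S \<subseteq> {..<n} - {j} \<and> card S = k}"

lemma card_others: "j < n \<Longrightarrow> card ({..<n} - {j}) = n - 1"
  by simp

lemma X_fin: "finite (X1 j)" "finite (X0 j)"
  by (rule finite_subset[of _ "Pow {..<n}"], blast, simp)+

lemma X_ne: assumes "j < n" shows "X1 j \<noteq> {}" "X0 j \<noteq> {}"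
proof -
  have c: "card ({..<n} - {j}) = n - 1" using assms by simp
  have f: "finite ({..<n} - {j})" by simp
  have "card (X1 j) = (n - 1) choose (k - 1)"
    using n_subsets[OF f, of "k - 1"] c by simp
  moreover have "card (X0 j) = (n - 1) choose k"
    using n_subsets[OF f, of "k"] c by simp
  moreover have "(n - 1) choose (k - 1) > 0" "(n-1) choose k > 0" using kn k2 by simp_all
  ultimately show "X1 j \<noteq> {}" "X0 j \<noteq> {}" by (metis card.empty less_irrefl)+
qed

lemma prob_noise:
  "measure_pmf.prob (noise n k pa) E = (\<Sum>j<n. measure_pmf.prob (selection n k pa j) {S. (j,S) \<in> E}) / n"
  unfolding noise_def measure_bind_pmf'
  using n_pos by (subst integral_pmf_of_set) (auto simp: vimage_def)

lemma prob_selection: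
  "measure_pmf.prob (selection n k pa j) B =
     pa * measure_pmf.prob (pmf_of_set (X1 j)) {S. insert j S \<in> B}
     + (1 - pa) * measure_pmf.prob (pmf_of_set (X0 j)) B"
  unfolding selection_def measure_bind_pmf'
  using pa0 pa1 by (simp add: vimage_def)

lemma prob_X_notin: assumes "j < n" shows "measure_pmf.prob (pmf_of_set (X0 j)) {S. j \<in> S} = 0"
proof -
  have "X0 j \<inter> {S. j \<in> S} = {}" by auto
  then show ?thesis using measure_pmf_of_set[OF X_ne(2)[OF assms] X_fin(2), of "{S. j \<in> S}"] by simp
qed

lemma sel_prob_self: assumes "j < n"
  shows "measure_pmf.prob (selection n k pa j) {S. j \<in> S} = pa"
  unfolding prob_selection using prob_X_notin[OF assms] by simp

lemma sel_prob_other: assumes "j < n" "i < n" "i \<noteq> j"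
  shows "measure_pmf.prob (selection n k pa j) {S. i \<in> S} = (k - pa) / (n - 1)"
proof -
  have A: "finite ({..<n} - {j})" "i \<in> {..<n} - {j}" "card ({..<n} - {j}) = n - 1"
    using assms by auto
  have "measure_pmf.prob (pmf_of_set (X1 j)) {S. i \<in> S} = real (k - 1) / real (n - 1)"
    using subset_prob[OF A(1,2), of "k - 1"] A(3) k2 kn by simp
  moreover have "measure_pmf.prob (pmf_of_set (X0 j)) {S. i \<in> S} = real k / real (n - 1)"
    using subset_prob[OF A(1,2), of "k"] A(3) k2 kn by simp
  moreover have "{S. i \<in> insert j S} = {S. i \<in> S}" using assms by auto
  ultimately have "measure_pmf.prob (selection n k pa j) {S. i \<in> S}
      = pa * (real (k - 1) / real (n - 1)) + (1 - pa) * (real k / real (n - 1))"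
    unfolding prob_selection by simp
  also have "\<dots> = (pa * (real k - 1) + (1 - pa) * real k) / real (n - 1)"
    using k2 by (simp add: of_nat_diff add_divide_distrib)
  also have "\<dots> = (k - pa) / (n - 1)"
    using n_gt_k by (simp add: of_nat_diff algebra_simps)
  finally show ?thesis .
qed

lemma p_tt: assumes "i < n"
  shows "measure_pmf.prob (noise n k pa) {\<omega>. fst \<omega> = i \<and> i \<in> snd \<omega>} = pa / n"
proof -
  have "(\<Sum>j<n. measure_pmf.prob (selection n k pa j) {S. (j,S) \<in> {\<omega>. fst \<omega> = i \<and> i \<in> snd \<omega>}})
     = (\<Sum>j<n. if j = i then pa else 0)"
    by (rule sum.cong) (auto simp: sel_prob_self)
  then show ?thesis unfolding prob_noise using assms by simp
qed

lemma p_up: assumes "i < n"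
  shows "measure_pmf.prob (noise n k pa) {\<omega>. fst \<omega> = i \<and> i \<notin> snd \<omega>} = (1 - pa) / n"
proof -
  have "(\<Sum>j<n. measure_pmf.prob (selection n k pa j) {S. (j,S) \<in> {\<omega>. fst \<omega> = i \<and> i \<notin> snd \<omega>}})
     = (\<Sum>j<n. if j = i then 1 - pa else 0)"
  proof (rule sum.cong)
    fix j assume "j \<in> {..<n}"
    show "measure_pmf.prob (selection n k pa j) {S. (j,S) \<in> {\<omega>. fst \<omega> = i \<and> i \<notin> snd \<omega>}}
       = (if j = i then 1 - pa else 0)"
    proof (cases "j = i")
      case True
      have "{S. (j,S) \<in> {\<omega>. fst \<omega> = i \<and> i \<notin> snd \<omega>}} = - {S. j \<in> S}" using True by auto
      then show ?thesis using True assms measure_pmf.prob_compl[of "{S. j \<in> S}" "selection n k pa j"]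
        sel_prob_self[OF assms] by (simp add: Compl_eq_Diff_UNIV)
    qed simp
  qed simp
  then show ?thesis unfolding prob_noise using assms by simp
qed

lemma p_dn: assumes "i < n"
  shows "measure_pmf.prob (noise n k pa) {\<omega>. fst \<omega> \<noteq> i \<and> i \<in> snd \<omega>} = (k - pa) / n"
proof -
  have "(\<Sum>j<n. measure_pmf.prob (selection n k pa j) {S. (j,S) \<in> {\<omega>. fst \<omega> \<noteq> i \<and> i \<in> snd \<omega>}})
     = (\<Sum>j<n. if j = i then 0 else (k - pa) / (n - 1))"
    by (rule sum.cong) (auto simp: sel_prob_other assms)
  also have "\<dots> = (\<Sum>j\<in>{..<n} - {i}. (k - pa) / (n - 1))"
    using assms by (subst sum.remove[of _ i]) (auto intro: sum.cong)
  also have "\<dots> = (k - pa)"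
    using assms n_gt_k k2 by (simp add: of_nat_diff)
  finally show ?thesis unfolding prob_noise by simp
qed

lemma p_sel: assumes "i < n"
  shows "measure_pmf.prob (noise n k pa) {\<omega>. i \<in> snd \<omega>} = k / n"
proof -
  have "{\<omega>. i \<in> snd \<omega>} = {\<omega>. fst \<omega> = i \<and> i \<in> snd \<omega>} \<union> {\<omega>. fst \<omega> \<noteq> i \<and> i \<in> snd \<omega>}"
    by auto
  then have "measure_pmf.prob (noise n k pa) {\<omega>. i \<in> snd \<omega>} = pa / n + (k - pa) / n"
    using measure_pmf.finite_measure_Union[of "{\<omega>. fst \<omega> = i \<and> i \<in> snd \<omega>}" "noise n k pa"
       "{\<omega>. fst \<omega> \<noteq> i \<and> i \<in> snd \<omega>}"] p_tt[OF assms] p_dn[OF assms]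
    by (auto simp: disjoint_iff)
  then show ?thesis by (simp add: add_divide_distrib[symmetric])
qed

end



context mixctx begin

definition W :: "nat \<Rightarrow> nat \<Rightarrow> nat pmf" where
  "W i x = map_pmf (\<lambda>\<omega>. Gi i \<omega> x) (noise n k pa)"

definition "a = (1 - pa) / n"
definition "b = (k - pa) / n"
definition "r = (1 - pa) / (k - pa)"

lemma kpa_pos: "real k - pa > 0" using k2 pa1 by simp
lemma b_pos: "b > 0" using kpa_pos n_pos by (simp add: b_def)
lemma a_nonneg: "a \<ge> 0" using pa1 by (simp add: a_def)
lemma a_eq: "a = r * b" using kpa_pos by (simp add: a_def b_def r_def)
lemma r_nonneg: "r \<ge> 0" using pa1 kpa_pos by (simp add: r_def)
lemma r_less1: "r < 1" using kpa_pos k2 by (simp add: r_def)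
lemma ab_le1: "a + b \<le> 1"
proof -
  have "real k + 1 \<le> real n" using n_gt_k by simp
  then show ?thesis unfolding a_def b_def using pa0 n_pos by (simp add: divide_simps)
qed

lemma Gi_alt: "Gi i \<omega> x = (if fst \<omega> = i \<and> i \<notin> snd \<omega> then x + 1
   else if fst \<omega> \<noteq> i \<and> i \<in> snd \<omega> then x - 1 else x)"
  by (simp add: Gi_def Let_def)

lemma marg:
  assumes "\<forall>s\<in>set_pmf \<pi>. length s = n" "i < n"
  shows "map_pmf (\<lambda>s. s ! i) (bind_pmf \<pi> (mix_step n k pa)) = bind_pmf (map_pmf (\<lambda>s. s ! i) \<pi>) (W i)"
proof -
  have 1: "bind_pmf (map_pmf (\<lambda>s. s!i) \<pi>) (W i) = bind_pmf \<pi> (\<lambda>s. W i (s!i))"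
    by (simp add: bind_map_pmf o_def)
  have 2: "map_pmf (\<lambda>s. s ! i) (bind_pmf \<pi> (mix_step n k pa)) = bind_pmf \<pi> (\<lambda>s. map_pmf (\<lambda>s. s ! i) (mix_step n k pa s))"
    by (simp add: map_bind_pmf)
  have 3: "bind_pmf \<pi> (\<lambda>s. map_pmf (\<lambda>s. s ! i) (mix_step n k pa s)) = bind_pmf \<pi> (\<lambda>s. W i (s!i))"
  proof (rule bind_pmf_cong[OF refl])
    fix s assume "s \<in> set_pmf \<pi>"
    then have "length s = n" using assms by auto
    then show "map_pmf (\<lambda>s. s ! i) (mix_step n k pa s) = W i (s ! i)"
      unfolding mix_step_noise W_def using assms(2) by (simp add: pmf.map_comp o_def nth_Fw)
  qed
  show ?thesis using 1 2 3 by simp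
qed

lemma prob_W_le: assumes "i < n"
  shows "measure_pmf.prob (W i x) {..y} =
     (if x < y then 1 else if x = y then 1 - a else if x = Suc y then b else 0)"
proof -
  have "measure_pmf.prob (W i x) {..y} = measure_pmf.prob (noise n k pa) {\<omega>. Gi i \<omega> x \<le> y}"
    unfolding W_def by (simp add: vimage_def)
  also have "\<dots> = (if x < y then 1 else if x = y then 1 - a else if x = Suc y then b else 0)"
  proof -
    consider "x < y" | "x = y" | "x = Suc y" | "x > Suc y" by linarith
    then show ?thesis
    proof cases
      case 1
      then have "{\<omega>. Gi i \<omega> x \<le> y} = UNIV" by (auto simp: Gi_alt)
      then show ?thesis using 1 by simp
    next
      case 2
      then have "{\<omega>. Gi i \<omega> x \<le> y} = UNIV - {\<omega>. fst \<omega> = i \<and> i \<notin> snd \<omega>}" by (auto simp: Gi_alt)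
      then show ?thesis using 2 p_up[OF assms] measure_pmf.prob_compl[of "{\<omega>. fst \<omega> = i \<and> i \<notin> snd \<omega>}" "noise n k pa"]
        by (simp add: a_def)
    next
      case 3
      then have "{\<omega>. Gi i \<omega> x \<le> y} = {\<omega>. fst \<omega> \<noteq> i \<and> i \<in> snd \<omega>}" by (auto simp: Gi_alt)
      then show ?thesis using 3 p_dn[OF assms] by (simp add: b_def)
    next
      case 4
      then have "{\<omega>. Gi i \<omega> x \<le> y} = {}" by (auto simp: Gi_alt)
      then show ?thesis using 4 by (simp only:) simp
    qed
  qed
  finally show ?thesis .
qed

lemma cut: assumes "i < n"
  shows "measure_pmf.prob (bind_pmf \<nu> (W i)) {..y} =
     measure_pmf.prob \<nu> {..y} - a * pmf \<nu> y + b * pmf \<nu> (Suc y)"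
proof -
  let ?f = "\<lambda>x. (if x < y then 1 else if x = y then 1 - a else if x = Suc y then b else 0) :: real"
  have "measure_pmf.prob (bind_pmf \<nu> (W i)) {..y} = (\<integral>x. ?f x \<partial>\<nu>)"
    unfolding measure_bind_pmf' prob_W_le[OF assms] ..
  also have "\<dots> = (\<Sum>x\<in>{..Suc y}. ?f x * pmf \<nu> x)"
    by (rule integral_measure_pmf_real) (auto split: if_splits)
  also have "{..Suc y} = insert (Suc y) (insert y {..<y})" by auto
  also have "(\<Sum>x\<in>insert (Suc y) (insert y {..<y}). ?f x * pmf \<nu> x)
     = b * pmf \<nu> (Suc y) + (1 - a) * pmf \<nu> y + (\<Sum>x\<in>{..<y}. pmf \<nu> x)"
    by (simp add: sum.insert)
  also have "measure_pmf.prob \<nu> {..y} = pmf \<nu> y + (\<Sum>x\<in>{..<y}. pmf \<nu> x)"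
    by (simp add: measure_measure_pmf_finite lessThan_Suc_atMost[symmetric])
  ultimately show ?thesis by (simp add: algebra_simps)
qed

definition T :: "nat pmf \<Rightarrow> nat \<Rightarrow> real" where
  "T \<nu> m = measure_pmf.prob \<nu> {m..}"

lemma T_0[simp]: "T \<nu> 0 = 1" by (simp add: T_def)

lemma T_compl: "T \<nu> (Suc y) = 1 - measure_pmf.prob \<nu> {..y}"
proof -
  have "{Suc y..} = UNIV - {..y}" by auto
  then show ?thesis unfolding T_def using measure_pmf.prob_compl[of "{..y}" \<nu>] by simp
qed

lemma T_pmf: "pmf \<nu> y = T \<nu> y - T \<nu> (Suc y)"
proof -
  have "{y..} = {y} \<union> {Suc y..}" by auto
  then have "T \<nu> y = pmf \<nu> y + T \<nu> (Suc y)" unfolding T_def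
    using measure_pmf.finite_measure_Union[of "{y}" \<nu> "{Suc y..}"]
    by (simp add: measure_pmf_single)
  then show ?thesis by simp
qed

lemma T_step: assumes "i < n"
  shows "T (bind_pmf \<nu> (W i)) (Suc m) = (1 - a - b) * T \<nu> (Suc m) + a * T \<nu> m + b * T \<nu> (Suc (Suc m))"
  using cut[OF assms, of \<nu> m] unfolding T_compl T_pmf[of \<nu> m] T_pmf[of \<nu> "Suc m"]
  by (simp add: T_compl algebra_simps)

lemma T_bound_step:
  assumes "i < n" "\<forall>m. T \<nu> m \<le> r ^ m"
  shows "\<forall>m. T (bind_pmf \<nu> (W i)) m \<le> r ^ m"
proof
  fix m show "T (bind_pmf \<nu> (W i)) m \<le> r ^ m"
  proof (cases m)
    case 0 then show ?thesis by simp
  next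
    case (Suc m')
    have "T (bind_pmf \<nu> (W i)) m = (1 - a - b) * T \<nu> (Suc m') + a * T \<nu> m' + b * T \<nu> (Suc (Suc m'))"
      using T_step[OF assms(1)] Suc by simp
    also have "\<dots> \<le> (1 - a - b) * r ^ Suc m' + a * r ^ m' + b * r ^ Suc (Suc m')"
    proof -
      have h: "T \<nu> (Suc m') \<le> r ^ Suc m'" "T \<nu> m' \<le> r ^ m'" "T \<nu> (Suc (Suc m')) \<le> r ^ Suc (Suc m')"
        using assms(2) by blast+
      have "1 - a - b \<ge> 0" using ab_le1 by simp
      then show ?thesis using h a_nonneg b_pos
        by (intro add_mono mult_left_mono) auto
    qed
    also have "\<dots> = r ^ Suc m'" unfolding a_eq by (simp add: algebra_simps)
    finally show ?thesis using Suc by simp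
  qed
qed

lemma stationary_ratio:
  assumes "i < n" "bind_pmf \<nu> (W i) = \<nu>"
  shows "pmf \<nu> (Suc y) = r * pmf \<nu> y"
proof -
  have "a * pmf \<nu> y = b * pmf \<nu> (Suc y)" using cut[OF assms(1), of \<nu> y] assms(2) by simp
  then show ?thesis using b_pos unfolding a_eq by (simp add: field_simps)
qed

lemma stationary_geom:
  assumes "i < n" "bind_pmf \<nu> (W i) = \<nu>"
  shows "pmf \<nu> 0 = 1 - r" "T \<nu> m = r ^ m"
proof -
  have pw: "pmf \<nu> y = r ^ y * pmf \<nu> 0" for y
    by (induction y) (auto simp: stationary_ratio[OF assms])
  have fs: "measure_pmf.prob \<nu> {..<m} = pmf \<nu> 0 * (1 - r ^ m) / (1 - r)" for m
  proof -
    have "measure_pmf.prob \<nu> {..<m} = (\<Sum>y<m. pmf \<nu> y)"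
      by (simp add: measure_measure_pmf_finite)
    also have "\<dots> = (\<Sum>y<m. r ^ y * pmf \<nu> 0)" by (rule sum.cong[OF refl]) (rule pw)
    finally have "measure_pmf.prob \<nu> {..<m} = (\<Sum>y<m. r ^ y) * pmf \<nu> 0"
      by (simp add: sum_distrib_right)
    then show ?thesis using r_less1 by (simp add: sum_gp_strict)
  qed
  have l1: "(\<lambda>m. measure_pmf.prob \<nu> {..<m}) \<longlonglongrightarrow> measure_pmf.prob \<nu> (\<Union>m. {..<m})"
    by (rule measure_pmf.finite_Lim_measure_incseq) (auto simp: incseq_def)
  have "(\<Union>m. {..<m::nat}) = UNIV" by auto
  then have l1': "(\<lambda>m. measure_pmf.prob \<nu> {..<m}) \<longlonglongrightarrow> 1" using l1 by simp
  have "(\<lambda>m. pmf \<nu> 0 * (1 - r ^ m) / (1 - r)) \<longlonglongrightarrow> pmf \<nu> 0 * (1 - 0) / (1 - r)"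
    using r_nonneg r_less1
    by (intro tendsto_intros LIMSEQ_power_zero) auto
  then have "(\<lambda>m. measure_pmf.prob \<nu> {..<m}) \<longlonglongrightarrow> pmf \<nu> 0 / (1 - r)"
    unfolding fs by simp
  then have "pmf \<nu> 0 / (1 - r) = 1" using l1' LIMSEQ_unique by blast
  then show p0: "pmf \<nu> 0 = 1 - r" using r_less1 by (simp add: field_simps)
  have "{m..} = UNIV - {..<m}" by auto
  then have "T \<nu> m = 1 - measure_pmf.prob \<nu> {..<m}" unfolding T_def
    using measure_pmf.prob_compl[of "{..<m}" \<nu>] by simp
  then show "T \<nu> m = r ^ m" unfolding fs p0 using r_less1 by simp
qed

end



context mixctx begin

lemma steady_tail:
  assumes st: "steady_state n k pa \<pi>" and i: "i < n"
  shows "measure_pmf.prob \<pi> {s. m \<le> s ! i} = r ^ m"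
proof -
  let ?\<nu> = "map_pmf (\<lambda>s. s ! i) \<pi>"
  have len: "\<forall>s\<in>set_pmf \<pi>. length s = n" and eq: "bind_pmf \<pi> (mix_step n k pa) = \<pi>"
    using st by (auto simp: steady_state_def)
  have "bind_pmf ?\<nu> (W i) = ?\<nu>" using marg[OF len i] eq by simp
  then have "T ?\<nu> m = r ^ m" by (rule stationary_geom(2)[OF i])
  then show ?thesis by (simp add: T_def vimage_def)
qed

definition "p = real k / real n"
definition "\<kappa> = pa * r + (1 - pa)"
definition "\<phi> = 1 - p + p * r"

fun cnt :: "(nat \<times> nat) option \<Rightarrow> nat" where
  "cnt None = 0"
| "cnt (Some (q, m)) = Suc m"

lemma tagged_step_noise:
  "tagged_step n k pa x = map_pmf (\<lambda>\<omega>. (Fw \<omega> (fst x), tag_update (snd \<omega>) (snd x))) (noise n k pa)"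
  unfolding tagged_step_def noise_def Fw_def by (simp add: map_bind_pmf pmf.map_comp o_def)

lemma tagged_init_noise:
  "tagged_init n k pa \<pi> = bind_pmf \<pi> (\<lambda>s. map_pmf (\<lambda>\<omega>. (Fw \<omega> s, tag_update (snd \<omega>) (Some (fst \<omega>, s ! fst \<omega>)))) (noise n k pa))"
  unfolding tagged_init_def noise_def Fw_def by (simp add: map_bind_pmf pmf.map_comp o_def)

definition tagok :: "nat list \<times> (nat \<times> nat) option \<Rightarrow> bool" where
  "tagok x = (case snd x of None \<Rightarrow> True | Some (q, m) \<Rightarrow> q < n)"

lemma set_noise: "\<omega> \<in> set_pmf (noise n k pa) \<Longrightarrow> fst \<omega> < n"
proof -
  have "{..<n} \<noteq> {}" using n_pos by auto
  then show "\<omega> \<in> set_pmf (noise n k pa) \<Longrightarrow> fst \<omega> < n" unfolding noise_def by auto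
qed

lemma tag_update_q: "tag_update S t = Some (q, m) \<Longrightarrow> \<exists>m'. t = Some (q, m')"
  by (auto simp: tag_update_def split: option.splits if_splits)

lemma dist_Suc: "tagged_dist n k pa \<pi> (Suc t) = bind_pmf (tagged_dist n k pa \<pi> t) (tagged_step n k pa)"
  unfolding tagged_dist_def by simp

lemma tagok_dist: "x \<in> set_pmf (tagged_dist n k pa \<pi> t) \<Longrightarrow> tagok x"
proof (induction t arbitrary: x)
  case 0
  then show ?case unfolding tagged_dist_def tagged_init_noise
    by (auto simp: tagok_def dest!: set_noise tag_update_q split: option.splits)
next
  case (Suc t)
  from Suc.prems obtain y where y: "y \<in> set_pmf (tagged_dist n k pa \<pi> t)" "x \<in> set_pmf (tagged_step n k pa y)"
    unfolding dist_Suc by auto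
  then obtain \<omega> where "x = (Fw \<omega> (fst y), tag_update (snd \<omega>) (snd y))" unfolding tagged_step_noise by auto
  with Suc.IH[OF y(1)] show ?case by (auto simp: tagok_def dest!: tag_update_q split: option.splits)
qed


lemma prob_step_cnt:
  assumes "tagok x"
  shows "measure_pmf.prob (tagged_step n k pa x) {z. m < cnt (snd z)} =
     (1 - p) * indicator {z. m < cnt (snd z)} x + p * indicator {z. Suc m < cnt (snd z)} x"
proof (cases "snd x")
  case None
  then show ?thesis unfolding tagged_step_noise by (simp add: tag_update_def vimage_def)
next
  case (Some qm)
  obtain q mm where qm: "snd x = Some (q, mm)" using Some by (cases qm) auto
  have q: "q < n" using assms qm by (simp add: tagok_def)
  have pr: "measure_pmf.prob (tagged_step n k pa x) {z. m < cnt (snd z)} =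
     measure_pmf.prob (noise n k pa) {\<omega>. m < (if q \<in> snd \<omega> then mm else Suc mm)}"
    unfolding tagged_step_noise using qm
    by (simp add: vimage_def tag_update_def)
  consider "m < mm" | "m = mm" | "mm < m" by linarith
  then show ?thesis
  proof cases
    case 1
    then have "{\<omega>. m < (if q \<in> snd \<omega> then mm else Suc mm)} = UNIV" by auto
    then show ?thesis using 1 pr qm by simp
  next
    case 2
    then have e: "{\<omega>. m < (if q \<in> snd \<omega> then mm else Suc mm)} = UNIV - {\<omega>. q \<in> snd \<omega>}" by auto
    have c: "measure_pmf.prob (noise n k pa) (UNIV - {\<omega>. q \<in> snd \<omega>}) = 1 - p"
      using p_sel[OF q] measure_pmf.prob_compl[of "{\<omega>. q \<in> snd \<omega>}" "noise n k pa"]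
      by (simp add: p_def)
    show ?thesis unfolding pr e c using 2 qm by (simp add: indicator_def)
  next
    case 3
    then have "{\<omega>. m < (if q \<in> snd \<omega> then mm else Suc mm)} = {}" by auto
    then show ?thesis using 3 pr qm by simp
  qed
qed

lemma integral_ind2:
  "(\<integral>x. c * indicator A x + d * indicator B x \<partial>measure_pmf M) =
     c * measure_pmf.prob M A + d * measure_pmf.prob M B"
proof -
  have i: "integrable (measure_pmf M) (indicator X :: _ \<Rightarrow> real)" for X
    by (rule measure_pmf.integrable_const_bound[where B=1]) (auto simp: indicator_def)
  show ?thesis using i by (subst Bochner_Integration.integral_add) auto
qed

definition G :: "nat list pmf \<Rightarrow> nat \<Rightarrow> nat \<Rightarrow> real" where
  "G \<pi> t m = measure_pmf.prob (tagged_dist n k pa \<pi> t) {z. m < cnt (snd z)}"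

lemma G_Suc: "G \<pi> (Suc t) m = (1 - p) * G \<pi> t m + p * G \<pi> t (Suc m)"
proof -
  have "G \<pi> (Suc t) m = (\<integral>x. measure_pmf.prob (tagged_step n k pa x) {z. m < cnt (snd z)}
        \<partial>measure_pmf (tagged_dist n k pa \<pi> t))"
    unfolding G_def dist_Suc measure_bind_pmf' ..
  also have "\<dots> = (\<integral>x. (1 - p) * indicator {z. m < cnt (snd z)} x + p * indicator {z. Suc m < cnt (snd z)} x
        \<partial>measure_pmf (tagged_dist n k pa \<pi> t))"
    by (rule integral_cong_AE) (auto simp: AE_measure_pmf_iff prob_step_cnt tagok_dist)
  also have "\<dots> = (1 - p) * G \<pi> t m + p * G \<pi> t (Suc m)"
    unfolding integral_ind2 G_def ..
  finally show ?thesis .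
qed

lemma cnt_tag_update: "cnt (tag_update S (Some (j, v))) = (if j \<in> S then v else Suc v)"
  by (cases v) (auto simp: tag_update_def)

lemma prob_diag: "measure_pmf.prob (noise n k pa) {\<omega>. fst \<omega> \<in> snd \<omega>} = pa"
proof -
  have "(\<Sum>j<n. measure_pmf.prob (selection n k pa j) {S. (j,S) \<in> {\<omega>. fst \<omega> \<in> snd \<omega>}}) = (\<Sum>j<n. pa)"
    by (rule sum.cong) (auto simp: sel_prob_self)
  then show ?thesis unfolding prob_noise using n_pos by simp
qed

lemma init_commute:
  "tagged_init n k pa \<pi> = bind_pmf (noise n k pa) (\<lambda>\<omega>. map_pmf (\<lambda>s. (Fw \<omega> s, tag_update (snd \<omega>) (Some (fst \<omega>, s ! fst \<omega>)))) \<pi>)"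
  unfolding tagged_init_noise map_pmf_def by (rule bind_commute_pmf)

lemma G0:
  assumes st: "steady_state n k pa \<pi>"
  shows "G \<pi> 0 m = \<kappa> * r ^ m"
proof -
  let ?E = "{\<omega>. fst \<omega> \<in> snd \<omega>}"
  have "G \<pi> 0 m = (\<integral>\<omega>. measure_pmf.prob \<pi> {s. m < (if fst \<omega> \<in> snd \<omega> then s ! fst \<omega> else Suc (s ! fst \<omega>))} \<partial>noise n k pa)"
    unfolding G_def tagged_dist_def funpow_0 init_commute measure_bind_pmf'
    by (simp add: vimage_def cnt_tag_update)
  also have "\<dots> = (\<integral>\<omega>. r ^ m * indicator (UNIV - ?E) \<omega> + r ^ Suc m * indicator ?E \<omega> \<partial>noise n k pa)"
  proof (rule integral_cong_AE)
    show "AE \<omega> in measure_pmf (noise n k pa). measure_pmf.prob \<pi> {s. m < (if fst \<omega> \<in> snd \<omega> then s ! fst \<omega> else Suc (s ! fst \<omega>))}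
       = r ^ m * indicator (UNIV - ?E) \<omega> + r ^ Suc m * indicator ?E \<omega>"
    proof (rule AE_pmfI)
      fix \<omega> assume "\<omega> \<in> set_pmf (noise n k pa)"
      then have j: "fst \<omega> < n" by (rule set_noise)
      show "measure_pmf.prob \<pi> {s. m < (if fst \<omega> \<in> snd \<omega> then s ! fst \<omega> else Suc (s ! fst \<omega>))}
       = r ^ m * indicator (UNIV - ?E) \<omega> + r ^ Suc m * indicator ?E \<omega>"
      proof (cases "fst \<omega> \<in> snd \<omega>")
        case True
        have "{s. m < s ! fst \<omega>} = {s. Suc m \<le> s ! fst \<omega>}" by auto
        then show ?thesis using True steady_tail[OF st j, of "Suc m"] by simp
      next
        case False
        have "{s. m < Suc (s ! fst \<omega>)} = {s. m \<le> s ! fst \<omega>}" by auto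
        then show ?thesis using False steady_tail[OF st j, of m] by simp
      qed
    qed
  qed auto
  also have "\<dots> = r ^ m * (1 - pa) + r ^ Suc m * pa"
    unfolding integral_ind2 using prob_diag measure_pmf.prob_compl[of ?E "noise n k pa"] by simp
  also have "\<dots> = \<kappa> * r ^ m" by (simp add: \<kappa>_def algebra_simps)
  finally show ?thesis .
qed

lemma G_closed:
  assumes st: "steady_state n k pa \<pi>"
  shows "G \<pi> t m = \<kappa> * r ^ m * \<phi> ^ t"
proof (induction t arbitrary: m)
  case 0 then show ?case using G0[OF st] by simp
next
  case (Suc t)
  show ?case unfolding G_Suc Suc.IH by (simp add: \<phi>_def algebra_simps)
qed

lemma in_mix_closed:
  assumes st: "steady_state n k pa \<pi>"
  shows "in_mix_prob n k pa \<pi> t = \<kappa> * \<phi> ^ t"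
proof -
  have "{x. snd x \<noteq> None} = {z :: nat list \<times> (nat \<times> nat) option. 0 < cnt (snd z)}"
  proof (rule Collect_cong)
    fix z :: "nat list \<times> (nat \<times> nat) option"
    show "(snd z \<noteq> None) = (0 < cnt (snd z))"
    proof (cases "snd z")
      case (Some x)
      then show ?thesis by (cases x) simp
    qed simp
  qed
  then have "in_mix_prob n k pa \<pi> t = G \<pi> t 0" unfolding in_mix_prob_def G_def by simp
  then show ?thesis using G_closed[OF st, of t 0] by simp
qed

lemma p_pos: "p > 0" and p_less1: "p < 1"
  using n_gt_k k2 by (auto simp: p_def)

lemma phi_bounds: "0 \<le> \<phi>" "\<phi> < 1"
proof -
  have "p * (1 - r) > 0" using p_pos r_less1 by simp
  then show "\<phi> < 1" by (simp add: \<phi>_def algebra_simps)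
  show "0 \<le> \<phi>" using p_less1 p_pos r_nonneg unfolding \<phi>_def
    by (smt (verit) mult_nonneg_nonneg)
qed

lemma delay_part:
  assumes st: "steady_state n k pa \<pi>" and lam: "lam > 0"
  shows "summable (in_mix_prob n k pa \<pi>) \<and>
       mean_delay n k lam pa \<pi> = (1 - pa) / (lam * (real k - 1))"
proof -
  have eq: "in_mix_prob n k pa \<pi> = (\<lambda>t. \<kappa> * \<phi> ^ t)" using in_mix_closed[OF st] by auto
  have g: "summable (\<lambda>t. \<phi> ^ t)" using phi_bounds by (intro summable_geometric) simp
  have s: "(\<Sum>t. \<kappa> * \<phi> ^ t) = \<kappa> / (1 - \<phi>)"
    using suminf_mult[OF g, of \<kappa>] suminf_geometric[of \<phi>] phi_bounds by simp
  have kap: "\<kappa> = real k * (1 - pa) / (real k - pa)"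
    using kpa_pos by (simp add: \<kappa>_def r_def field_simps)
  have one_phi: "1 - \<phi> = real k * (real k - 1) / (real n * (real k - pa))"
    using kpa_pos n_pos by (simp add: \<phi>_def p_def r_def field_simps)
  have k1: "real k - 1 > 0" using k2 by simp
  have "mean_delay n k lam pa \<pi> = \<kappa> / (1 - \<phi>) / (n * lam)"
    unfolding mean_delay_def eq s ..
  also have "\<dots> = (1 - pa) / (lam * (real k - 1))"
  proof -
    have nz: "real k - pa \<noteq> 0" "real k - 1 \<noteq> 0" "real n \<noteq> 0" "real k \<noteq> 0" "lam \<noteq> 0"
      using kpa_pos n_pos k1 lam k2 by auto
    have alg: "N * A / K1 * (kk * K1 / (N * D)) = kk * A / D"
      if "N \<noteq> 0" "K1 \<noteq> 0" "D \<noteq> 0" for N A K1 D kk :: real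
      using that by (simp add: field_simps)
    have m: "real n * (1 - pa) / (real k - 1) * (1 - \<phi>) = \<kappa>"
      unfolding kap one_phi by (rule alg) (use nz in auto)
    have "1 - \<phi> \<noteq> 0" using phi_bounds by simp
    then have "\<kappa> / (1 - \<phi>) = real n * (1 - pa) / (real k - 1)"
      using m by (metis nonzero_mult_div_cancel_right)
    then have "\<kappa> / (1 - \<phi>) / (real n * lam) = real n * (1 - pa) / (real k - 1) / (real n * lam)" by simp
    also have "\<dots> = (1 - pa) / (lam * (real k - 1))" using nz by (simp add: field_simps)
    finally show ?thesis .
  qed
  finally show ?thesis using eq g summable_mult by auto
qed

lemma load_part:
  assumes st: "steady_state n k pa \<pi>" and i: "i < n"
  shows "queue_load \<pi> i = (1 - pa) / (real k - pa)"
proof -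
  have "{s. 0 < s ! i} = {s. Suc 0 \<le> s ! i}" by auto
  then show ?thesis unfolding queue_load_def using steady_tail[OF st i, of 1] by (simp add: r_def)
qed

end



context mixctx begin

definition mu :: "nat \<Rightarrow> nat list pmf" where
  "mu t = ((\<lambda>d. bind_pmf d (mix_step n k pa)) ^^ t) (return_pmf (replicate n 0))"

lemma mu_0: "mu 0 = return_pmf (replicate n 0)" by (simp add: mu_def)
lemma mu_Suc: "mu (Suc t) = bind_pmf (mu t) (mix_step n k pa)" by (simp add: mu_def)

lemma mu_len: "s \<in> set_pmf (mu t) \<Longrightarrow> length s = n"
proof (induction t arbitrary: s)
  case 0 then show ?case by (simp add: mu_0)
next
  case (Suc t)
  then show ?case unfolding mu_Suc mix_step_noise by auto
qed

abbreviation leq :: "nat list \<Rightarrow> nat list \<Rightarrow> bool" where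
  "leq \<equiv> list_all2 (\<le>)"

lemma Gi_mono: "x \<le> y \<Longrightarrow> Gi i \<omega> x \<le> Gi i \<omega> y"
  unfolding Gi_alt by auto

lemma Gi_lower: "x \<le> Gi i \<omega> x + 1"
  unfolding Gi_alt by auto

lemma Fw_mono: "leq x y \<Longrightarrow> leq (Fw \<omega> x) (Fw \<omega> y)"
  by (auto simp: list_all2_conv_all_nth nth_Fw Gi_mono)

lemma leq_trans: "leq x y \<Longrightarrow> leq y z \<Longrightarrow> leq x z"
  unfolding list_all2_conv_all_nth by (metis order_trans)

lemma leq_antisym: "leq x y \<Longrightarrow> leq y x \<Longrightarrow> x = y"
  by (rule list_all2_antisym[where P="(\<le>)" and Q="(\<le>)"]) auto

lemma leq_refl: "leq x x"
  by (simp add: list_all2_conv_all_nth)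

lemma coupling:
  "\<exists>\<xi>. map_pmf fst \<xi> = mu t \<and> map_pmf snd \<xi> = mu (Suc t) \<and> (\<forall>z\<in>set_pmf \<xi>. leq (fst z) (snd z))"
proof (induction t)
  case 0
  let ?\<xi> = "map_pmf (\<lambda>y. (replicate n 0, y)) (mu (Suc 0))"
  have "\<forall>z\<in>set_pmf ?\<xi>. leq (fst z) (snd z)"
    using mu_len[of _ "Suc 0"] by (auto simp: list_all2_conv_all_nth)
  then show ?case by (intro exI[of _ ?\<xi>]) (simp add: pmf.map_comp o_def mu_0)
next
  case (Suc t)
  then obtain \<xi> where \<xi>: "map_pmf fst \<xi> = mu t" "map_pmf snd \<xi> = mu (Suc t)"
    "\<forall>z\<in>set_pmf \<xi>. leq (fst z) (snd z)" by blast
  let ?\<xi> = "bind_pmf \<xi> (\<lambda>z. map_pmf (\<lambda>\<omega>. (Fw \<omega> (fst z), Fw \<omega> (snd z))) (noise n k pa))"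
  have 1: "map_pmf fst ?\<xi> = mu (Suc t)"
  proof -
    have "map_pmf fst ?\<xi> = bind_pmf \<xi> (\<lambda>z. mix_step n k pa (fst z))"
      by (simp add: map_bind_pmf pmf.map_comp o_def mix_step_noise)
    also have "\<dots> = bind_pmf (map_pmf fst \<xi>) (mix_step n k pa)" by (simp add: bind_map_pmf o_def)
    finally show ?thesis using \<xi>(1) mu_Suc by simp
  qed
  have 2: "map_pmf snd ?\<xi> = mu (Suc (Suc t))"
  proof -
    have "map_pmf snd ?\<xi> = bind_pmf \<xi> (\<lambda>z. mix_step n k pa (snd z))"
      by (simp add: map_bind_pmf pmf.map_comp o_def mix_step_noise)
    also have "\<dots> = bind_pmf (map_pmf snd \<xi>) (mix_step n k pa)" by (simp add: bind_map_pmf o_def)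
    finally show ?thesis using \<xi>(2) mu_Suc[of "Suc t"] by simp
  qed
  have 3: "\<forall>z\<in>set_pmf ?\<xi>. leq (fst z) (snd z)" using \<xi>(3) by (auto intro: Fw_mono)
  show ?case using 1 2 3 by blast
qed

definition downc :: "nat list set \<Rightarrow> bool" where
  "downc D \<longleftrightarrow> (\<forall>x y. leq x y \<longrightarrow> y \<in> D \<longrightarrow> x \<in> D)"

lemma down_mono:
  assumes "downc D"
  shows "measure_pmf.prob (mu (Suc t)) D \<le> measure_pmf.prob (mu t) D"
proof -
  obtain \<xi> where \<xi>: "map_pmf fst \<xi> = mu t" "map_pmf snd \<xi> = mu (Suc t)"
    "\<forall>z\<in>set_pmf \<xi>. leq (fst z) (snd z)" using coupling by blast
  have "measure_pmf.prob \<xi> (snd -` D) \<le> measure_pmf.prob \<xi> (fst -` D)"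
    using \<xi>(3) assms unfolding downc_def
    by (intro measure_pmf.finite_measure_mono_AE) (auto simp: AE_measure_pmf_iff)
  then show ?thesis using \<xi>(1,2) by (metis measure_map_pmf)
qed

definition D1 :: "nat list \<Rightarrow> nat list set" where "D1 x = {y. leq y x}"
definition D2 :: "nat list \<Rightarrow> nat list set" where "D2 x = {y. leq y x \<and> y \<noteq> x}"

lemma downc_D1: "downc (D1 x)"
  unfolding downc_def D1_def using leq_trans by blast

lemma downc_D2: "downc (D2 x)"
  unfolding downc_def D2_def using leq_trans leq_antisym by blast

lemma pmf_D: "pmf M x = measure_pmf.prob M (D1 x) - measure_pmf.prob M (D2 x)"
proof -
  have e: "D1 x = D2 x \<union> {x}" and d: "D2 x \<inter> {x} = {}" using leq_refl by (auto simp: D1_def D2_def)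
  have "measure_pmf.prob M (D1 x) = measure_pmf.prob M (D2 x \<union> {x})" by (simp only: e)
  also have "\<dots> = measure_pmf.prob M (D2 x) + measure_pmf.prob M {x}"
    by (rule measure_pmf.finite_measure_Union) (use d in auto)
  finally have "measure_pmf.prob M (D1 x) = measure_pmf.prob M (D2 x) + pmf M x"
    by (simp add: measure_pmf_single)
  then show ?thesis by simp
qed

lemma down_conv: assumes "downc D" shows "convergent (\<lambda>t. measure_pmf.prob (mu t) D)"
proof -
  have "decseq (\<lambda>t. measure_pmf.prob (mu t) D)"
    using down_mono[OF assms] by (intro decseq_SucI) auto
  then obtain L where "(\<lambda>t. measure_pmf.prob (mu t) D) \<longlonglongrightarrow> L"
    by (rule decseq_convergent[where B=0]) auto
  then show ?thesis by (auto simp: convergent_def)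
qed

definition f :: "nat list \<Rightarrow> real" where
  "f x = lim (\<lambda>t. measure_pmf.prob (mu t) (D1 x)) - lim (\<lambda>t. measure_pmf.prob (mu t) (D2 x))"

lemma f_conv: "(\<lambda>t. pmf (mu t) x) \<longlonglongrightarrow> f x"
  unfolding pmf_D f_def
  by (intro tendsto_diff convergent_LIMSEQ_iff[THEN iffD1] down_conv downc_D1 downc_D2)

lemma f_nonneg: "f x \<ge> 0"
  by (rule LIMSEQ_le_const[OF f_conv]) auto

lemma f_len: "length x \<noteq> n \<Longrightarrow> f x = 0"
proof -
  assume "length x \<noteq> n"
  then have "pmf (mu t) x = 0" for t using mu_len by (auto simp: set_pmf_eq)
  then have "(\<lambda>t. 0) \<longlonglongrightarrow> f x" using f_conv[of x] by simp
  then show "f x = 0" by (simp add: LIMSEQ_const_iff)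
qed

lemma f_sum_conv: "finite A \<Longrightarrow> (\<lambda>t. measure_pmf.prob (mu t) A) \<longlonglongrightarrow> sum f A"
  by (simp add: measure_measure_pmf_finite f_conv tendsto_sum)

lemma f_sum_le1: "finite A \<Longrightarrow> sum f A \<le> 1"
  by (rule LIMSEQ_le_const2[OF f_sum_conv]) auto

lemma marg_tail: assumes "i < n" shows "measure_pmf.prob (mu t) {s. m \<le> s ! i} \<le> r ^ m"
proof -
  have "\<forall>m. T (map_pmf (\<lambda>s. s ! i) (mu t)) m \<le> r ^ m"
  proof (induction t)
    case 0
    show ?case
    proof
      fix m show "T (map_pmf (\<lambda>s. s ! i) (mu 0)) m \<le> r ^ m"
        using r_nonneg assms by (cases m) (auto simp: mu_0 T_def indicator_def)
    qed
  next
    case (Suc t)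
    have "map_pmf (\<lambda>s. s ! i) (mu (Suc t)) = bind_pmf (map_pmf (\<lambda>s. s ! i) (mu t)) (W i)"
      unfolding mu_Suc by (rule marg) (use mu_len assms in auto)
    then show ?case using T_bound_step[OF assms Suc.IH] by simp
  qed
  then show ?thesis by (simp add: T_def vimage_def)
qed

definition Box :: "nat \<Rightarrow> nat list set" where
  "Box c = {s. set s \<subseteq> {..c} \<and> length s = n}"

lemma Box_finite: "finite (Box c)"
  unfolding Box_def by (rule finite_lists_length_eq) simp

lemma Box_mono: "c \<le> c' \<Longrightarrow> Box c \<subseteq> Box c'"
  unfolding Box_def by auto

lemma Box_prob: "measure_pmf.prob (mu t) (Box c) \<ge> 1 - n * r ^ Suc c"
proof -
  have "measure_pmf.prob (mu t) (UNIV - Box c) \<le> measure_pmf.prob (mu t) (\<Union>i\<in>{..<n}. {s. Suc c \<le> s ! i})"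
  proof (rule measure_pmf.finite_measure_mono_AE)
    show "AE x in measure_pmf (mu t). x \<in> UNIV - Box c \<longrightarrow> x \<in> (\<Union>i\<in>{..<n}. {s. Suc c \<le> s ! i})"
    proof (rule AE_pmfI, rule impI)
      fix x assume x: "x \<in> set_pmf (mu t)" "x \<in> UNIV - Box c"
      have "length x = n" using x(1) by (rule mu_len)
      then obtain v where "v \<in> set x" "\<not> v \<le> c" using x(2) by (auto simp: Box_def)
      then obtain i where "i < length x" "x ! i = v" by (auto simp: in_set_conv_nth)
      then show "x \<in> (\<Union>i\<in>{..<n}. {s. Suc c \<le> s ! i})" using \<open>length x = n\<close> \<open>\<not> v \<le> c\<close>
        by (intro UN_I[of i]) auto
    qed
  qed auto
  also have "\<dots> \<le> (\<Sum>i\<in>{..<n}. measure_pmf.prob (mu t) {s. Suc c \<le> s ! i})"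
    by (rule measure_pmf.finite_measure_subadditive_finite) auto
  also have "\<dots> \<le> (\<Sum>i\<in>{..<n}. r ^ Suc c)"
    by (rule sum_mono) (rule marg_tail, simp)
  finally have "measure_pmf.prob (mu t) (UNIV - Box c) \<le> n * r ^ Suc c" by simp
  then show ?thesis using measure_pmf.prob_compl[of "Box c" "mu t"] by simp
qed

lemma Box_sum: "sum f (Box c) \<ge> 1 - n * r ^ Suc c"
  by (rule LIMSEQ_le_const[OF f_sum_conv[OF Box_finite]]) (use Box_prob in auto)

lemma f_total: "(\<integral>\<^sup>+x. ennreal (f x) \<partial>count_space UNIV) = 1"
proof -
  define g where "g c x = ennreal (f x) * indicator (Box c) x" for c x
  have inc: "incseq g"
  proof (rule incseq_SucI, rule le_funI)
    fix c x show "g c x \<le> g (Suc c) x"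
      using Box_mono[of c "Suc c"] by (auto simp: g_def indicator_def)
  qed
  have sup: "(SUP c. g c x) = ennreal (f x)" for x
  proof (cases "length x = n")
    case True
    have "x \<in> Box (sum_list x)" using True by (auto simp: Box_def member_le_sum_list)
    then have "ennreal (f x) \<le> (SUP c. g c x)" by (intro SUP_upper2[of "sum_list x"]) (auto simp: g_def)
    moreover have "(SUP c. g c x) \<le> ennreal (f x)" by (intro SUP_least) (auto simp: g_def indicator_def)
    ultimately show ?thesis by (rule antisym[rotated])
  next
    case False then show ?thesis by (simp add: g_def f_len)
  qed
  have int: "(\<integral>\<^sup>+x. g c x \<partial>count_space UNIV) = ennreal (sum f (Box c))" for c
  proof -
    have "(\<integral>\<^sup>+x. g c x \<partial>count_space UNIV) = (\<integral>\<^sup>+x. ennreal (f x) \<partial>count_space (Box c))"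
      unfolding g_def by (subst nn_integral_count_space_indicator) auto
    also have "\<dots> = (\<Sum>x\<in>Box c. ennreal (f x))" by (rule nn_integral_count_space_finite[OF Box_finite])
    also have "\<dots> = ennreal (sum f (Box c))" using f_nonneg by simp
    finally show ?thesis .
  qed
  have "(\<integral>\<^sup>+x. ennreal (f x) \<partial>count_space UNIV) = (\<integral>\<^sup>+x. (SUP c. g c x) \<partial>count_space UNIV)"
    using sup by simp
  also have "\<dots> = (SUP c. \<integral>\<^sup>+x. g c x \<partial>count_space UNIV)"
    by (rule nn_integral_monotone_convergence_SUP[OF inc]) simp
  also have "\<dots> = (SUP c. ennreal (sum f (Box c)))" using int by simp
  also have "\<dots> = 1"
  proof -
    have incS: "incseq (\<lambda>c. ennreal (sum f (Box c)))"
      unfolding incseq_def using Box_mono Box_finite f_nonneg by (auto intro!: ennreal_leI sum_mono2)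
    have pz: "(\<lambda>c. r ^ Suc c) \<longlonglongrightarrow> 0"
      using r_nonneg r_less1 by (intro LIMSEQ_Suc[OF LIMSEQ_power_zero]) auto
    have lo: "(\<lambda>c. 1 - real n * r ^ Suc c) \<longlonglongrightarrow> 1"
      using tendsto_diff[OF tendsto_const tendsto_mult_right_zero[OF pz, of "real n"], of 1] by simp
    have lim1: "(\<lambda>c. sum f (Box c)) \<longlonglongrightarrow> 1"
    proof (rule real_tendsto_sandwich[where f="\<lambda>c. 1 - real n * r ^ Suc c" and h="\<lambda>c. 1"])
      show "eventually (\<lambda>c. 1 - real n * r ^ Suc c \<le> sum f (Box c)) sequentially" using Box_sum by simp
      show "eventually (\<lambda>c. sum f (Box c) \<le> 1) sequentially" using f_sum_le1[OF Box_finite] by simp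
    qed (use lo in auto)
    then have "(\<lambda>c. ennreal (sum f (Box c))) \<longlonglongrightarrow> ennreal 1" by (rule tendsto_ennrealI)
    moreover have "(\<lambda>c. ennreal (sum f (Box c))) \<longlonglongrightarrow> (SUP c. ennreal (sum f (Box c)))"
      by (rule LIMSEQ_SUP[OF incS])
    ultimately show ?thesis using LIMSEQ_unique by fastforce
  qed
  finally show ?thesis .
qed

definition pi0 :: "nat list pmf" where "pi0 = embed_pmf f"

lemma pmf_pi0: "pmf pi0 x = f x"
  unfolding pi0_def by (rule pmf_embed_pmf[OF f_nonneg f_total])

lemma set_pi0: "set_pmf pi0 = {x. f x \<noteq> 0}"
  unfolding pi0_def by (rule set_embed_pmf[OF f_nonneg f_total])

definition Fin :: "nat list \<Rightarrow> nat list set" where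
  "Fin y = {x. set x \<subseteq> {..Suc (sum_list y)} \<and> length x = length y}"

lemma Fin_finite: "finite (Fin y)"
  unfolding Fin_def by (rule finite_lists_length_eq) simp

lemma Fin_support:
  assumes "pmf (mix_step n k pa x) y \<noteq> 0"
  shows "x \<in> Fin y"
proof -
  have "y \<in> set_pmf (mix_step n k pa x)" using assms by (simp add: set_pmf_eq)
  then obtain \<omega> where y: "y = Fw \<omega> x" unfolding mix_step_noise by auto
  have len: "length x = length y" using y by simp
  have "v \<le> Suc (sum_list y)" if "v \<in> set x" for v
  proof -
    obtain i where i: "i < length x" "x ! i = v" using \<open>v \<in> set x\<close> by (auto simp: in_set_conv_nth)
    have "y ! i = Gi i \<omega> (x ! i)" using y i by (simp add: nth_Fw)
    moreover have "y ! i \<le> sum_list y" using i len by (intro elem_le_sum_list) simp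
    ultimately show ?thesis using Gi_lower[of "x ! i" i \<omega>] i by simp
  qed
  then show ?thesis using len by (auto simp: Fin_def)
qed

lemma bind_finite_sum:
  "pmf (bind_pmf M (mix_step n k pa)) y = (\<Sum>x\<in>Fin y. pmf M x * pmf (mix_step n k pa x) y)"
  unfolding pmf_bind
  by (subst integral_measure_pmf_real[OF Fin_finite]) (auto dest: Fin_support simp: mult.commute)

lemma pi0_stationary: "bind_pmf pi0 (mix_step n k pa) = pi0"
proof (rule pmf_eqI)
  fix y
  have l1: "(\<lambda>t. pmf (mu (Suc t)) y) \<longlonglongrightarrow> f y" using f_conv by (rule LIMSEQ_Suc)
  have l2: "(\<lambda>t. pmf (mu (Suc t)) y) \<longlonglongrightarrow> (\<Sum>x\<in>Fin y. f x * pmf (mix_step n k pa x) y)"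
    unfolding mu_Suc bind_finite_sum by (intro tendsto_sum tendsto_mult_right f_conv)
  have "f y = (\<Sum>x\<in>Fin y. f x * pmf (mix_step n k pa x) y)" using l1 l2 by (rule LIMSEQ_unique)
  then show "pmf (bind_pmf pi0 (mix_step n k pa)) y = pmf pi0 y"
    unfolding bind_finite_sum pmf_pi0 by simp
qed

lemma exists_steady: "\<exists>\<pi>. steady_state n k pa \<pi>"
proof -
  have "\<forall>s\<in>set_pmf pi0. length s = n" using f_len by (auto simp: set_pi0)
  then show ?thesis using pi0_stationary by (auto simp: steady_state_def)
qed

end

theorem theorem3:
  fixes n k :: nat and lam pa :: real
  assumes "2 \<le> k" and "k \<le> n - 1" and "lam > 0" and "0 \<le> pa" and "pa \<le> 1"
  shows "(\<exists>\<pi>. steady_state n k pa \<pi>) \<and>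
    (\<forall>\<pi>. steady_state n k pa \<pi> \<longrightarrow>
       (\<forall>i<n. queue_load \<pi> i = (1 - pa) / (real k - pa)) \<and>
       summable (in_mix_prob n k pa \<pi>) \<and>
       mean_delay n k lam pa \<pi> = (1 - pa) / (lam * (real k - 1)))"
proof -
  interpret mixctx n k pa using assms by unfold_locales auto
  show ?thesis using exists_steady load_part delay_part[OF _ assms(3)] by blast
qed



end
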